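(* Let $G$ be an upward planar digraph with maximum in- and outdegree at most two, and let $e=(u,v)$ be a transitive edge of $G$, i.e., there exists a directed path from $u$ to $v$ in $G$ different from $e$. Then $e$ is a bad edge in every upward planar embedding of $G$.
   Context: A planar drawing of a digraph is upward if every edge $(u,v)$ is drawn as a curve strictly increasing in $y$ from $u$ to $v$; an upward planar embedding is the equivalence class of upward planar drawings with the same left-to-right orderings of incoming edges and of outgoing edges around each vertex. If a vertex has two incoming (outgoing) edges, these are its left and right incoming (outgoing) edges according to the embedding. An edge $e=(u,v)$ is a bad edge if it is the left outgoing edge of $u$ and the left incoming edge of $v$, or the right outgoing edge of $u$ and the right incoming edge of $v$. *)

theory Defs
  imports "HOL-Analysis.Analysis"
begin

definition outdeg :: "('v \<times> 'v) set \<Rightarrow> 'v \<Rightarrow> nat" where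
  "outdeg E x = card {w. (x, w) \<in> E}"

definition indeg :: "('v \<times> 'v) set \<Rightarrow> 'v \<Rightarrow> nat" where
  "indeg E x = card {w. (w, x) \<in> E}"

definition is_dpath :: "'v set \<Rightarrow> ('v \<times> 'v) set \<Rightarrow> 'v list \<Rightarrow> 'v \<Rightarrow> 'v \<Rightarrow> bool" where
  "is_dpath V E p a b \<longleftrightarrow> p \<noteq> [] \<and> hd p = a \<and> last p = b \<and> distinct p \<and> set p \<subseteq> V \<and>
     (\<forall>i. Suc i < length p \<longrightarrow> (p ! i, p ! Suc i) \<in> E)"

definition upward_planar_drawing ::
  "'v set \<Rightarrow> ('v \<times> 'v) set \<Rightarrow> ('v \<Rightarrow> real \<times> real) \<Rightarrow> ('v \<times> 'v \<Rightarrow> real \<Rightarrow> real \<times> real) \<Rightarrow> bool" where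
  "upward_planar_drawing V E pos crv \<longleftrightarrow>
     inj_on pos V \<and>
     (\<forall>(a, b)\<in>E. path (crv (a, b)) \<and> pathstart (crv (a, b)) = pos a \<and>
        pathfinish (crv (a, b)) = pos b \<and> strict_mono_on {0..1} (\<lambda>t. snd (crv (a, b) t))) \<and>
     (\<forall>e\<in>E. \<forall>t\<in>{0<..<1}. crv e t \<notin> pos ` V) \<and>
     (\<forall>e\<in>E. \<forall>e'\<in>E. e \<noteq> e' \<longrightarrow> (\<forall>s\<in>{0..1}. \<forall>t\<in>{0..1}. crv e s = crv e' t \<longrightarrow>
        (\<exists>w\<in>{fst e, snd e} \<inter> {fst e', snd e'}. crv e s = pos w)))"

definition upward_planar :: "'v set \<Rightarrow> ('v \<times> 'v) set \<Rightarrow> bool" where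
  "upward_planar V E \<longleftrightarrow> finite V \<and> E \<subseteq> V \<times> V \<and> (\<exists>pos crv. upward_planar_drawing V E pos crv)"

text \<open>Left-to-right order of two outgoing edges e1, e2 of u: just above u, at every
  common height, e1 lies strictly to the left of e2.\<close>

definition out_left_of ::
  "('v \<Rightarrow> real \<times> real) \<Rightarrow> ('v \<times> 'v \<Rightarrow> real \<Rightarrow> real \<times> real) \<Rightarrow> 'v \<Rightarrow> 'v \<times> 'v \<Rightarrow> 'v \<times> 'v \<Rightarrow> bool" where
  "out_left_of pos crv u e1 e2 \<longleftrightarrow> (\<exists>\<delta>>0. \<forall>s\<in>{0<..1}. \<forall>t\<in>{0<..1}.
     snd (crv e1 s) = snd (crv e2 t) \<and> snd (crv e1 s) < snd (pos u) + \<delta> \<longrightarrow>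
     fst (crv e1 s) < fst (crv e2 t))"

text \<open>Left-to-right order of two incoming edges e1, e2 of v: just below v.\<close>

definition in_left_of ::
  "('v \<Rightarrow> real \<times> real) \<Rightarrow> ('v \<times> 'v \<Rightarrow> real \<Rightarrow> real \<times> real) \<Rightarrow> 'v \<Rightarrow> 'v \<times> 'v \<Rightarrow> 'v \<times> 'v \<Rightarrow> bool" where
  "in_left_of pos crv v e1 e2 \<longleftrightarrow> (\<exists>\<delta>>0. \<forall>s\<in>{0..<1}. \<forall>t\<in>{0..<1}.
     snd (crv e1 s) = snd (crv e2 t) \<and> snd (crv e1 s) > snd (pos v) - \<delta> \<longrightarrow>
     fst (crv e1 s) < fst (crv e2 t))"

definition left_out_edge where
  "left_out_edge E pos crv e \<longleftrightarrow> (\<exists>e'\<in>E. e' \<noteq> e \<and> fst e' = fst e \<and> out_left_of pos crv (fst e) e e')"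
definition right_out_edge where
  "right_out_edge E pos crv e \<longleftrightarrow> (\<exists>e'\<in>E. e' \<noteq> e \<and> fst e' = fst e \<and> out_left_of pos crv (fst e) e' e)"
definition left_in_edge where
  "left_in_edge E pos crv e \<longleftrightarrow> (\<exists>e'\<in>E. e' \<noteq> e \<and> snd e' = snd e \<and> in_left_of pos crv (snd e) e e')"
definition right_in_edge where
  "right_in_edge E pos crv e \<longleftrightarrow> (\<exists>e'\<in>E. e' \<noteq> e \<and> snd e' = snd e \<and> in_left_of pos crv (snd e) e' e)"

definition bad_edge where
  "bad_edge E pos crv e \<longleftrightarrow>
     (left_out_edge E pos crv e \<and> left_in_edge E pos crv e) \<or>
     (right_out_edge E pos crv e \<and> right_in_edge E pos crv e)"

end

theory Submission imports Defs begin

definition hinv :: "(real \<Rightarrow> real \<times> real) \<Rightarrow> real \<Rightarrow> real" where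
  "hinv g = the_inv_into {0..1} (\<lambda>t. snd (g t))"
definition Xc :: "(real \<Rightarrow> real \<times> real) \<Rightarrow> real \<Rightarrow> real" where
  "Xc g y = fst (g (hinv g y))"

lemma curve_facts:
  assumes p: "path g" and m: "strict_mono_on {0..1} (\<lambda>t. snd (g t))"
  shows "\<forall>t\<in>{0..1}. hinv g (snd (g t)) = t"
    and "\<forall>y\<in>{snd (g 0)..snd (g 1)}. hinv g y \<in> {0..1} \<and> snd (g (hinv g y)) = y"
    and "continuous_on {snd (g 0)..snd (g 1)} (Xc g)"
proof -
  let ?H = "\<lambda>t. snd (g t)"
  have inj: "inj_on ?H {0..1}" using m by (rule strict_mono_on_imp_inj_on)
  have cg: "continuous_on {0..1} g" using p by (simp add: path_def)
  have cH: "continuous_on {0..1} ?H" using cg by (intro continuous_intros)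
  show A: "\<forall>t\<in>{0..1}. hinv g (snd (g t)) = t"
    using inj unfolding hinv_def by (auto intro: the_inv_into_f_f)
  have img: "?H ` {0..1} = {snd (g 0)..snd (g 1)}"
  proof
    show "?H ` {0..1} \<subseteq> {snd (g 0)..snd (g 1)}"
    proof
      fix y assume "y \<in> ?H ` {0..1}"
      then obtain t where t: "t \<in> {0..1}" "y = ?H t" by auto
      have "?H 0 \<le> ?H t" using m t by (cases "t = 0") (auto intro!: less_imp_le strict_mono_onD[OF m])
      moreover have "?H t \<le> ?H 1" using m t by (cases "t = 1") (auto intro!: less_imp_le strict_mono_onD[OF m])
      ultimately show "y \<in> {snd (g 0)..snd (g 1)}" using t by auto
    qed
  next
    show "{snd (g 0)..snd (g 1)} \<subseteq> ?H ` {0..1}"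
    proof
      fix y assume y: "y \<in> {snd (g 0)..snd (g 1)}"
      have "\<exists>x\<ge>0. x \<le> 1 \<and> ?H x = y"
        using y cH by (intro IVT') auto
      then show "y \<in> ?H ` {0..1}" by force
    qed
  qed
  show B: "\<forall>y\<in>{snd (g 0)..snd (g 1)}. hinv g y \<in> {0..1} \<and> snd (g (hinv g y)) = y"
  proof
    fix y assume "y \<in> {snd (g 0)..snd (g 1)}"
    then have "y \<in> ?H ` {0..1}" using img by simp
    then obtain t where t: "t \<in> {0..1}" "y = ?H t" by auto
    then show "hinv g y \<in> {0..1} \<and> snd (g (hinv g y)) = y"
      using A by auto
  qed
  have ci: "continuous_on {snd (g 0)..snd (g 1)} (hinv g)"
    using continuous_on_inv[OF cH compact_Icc A] img by simp
  have "continuous_on {snd (g 0)..snd (g 1)} (\<lambda>y. fst (g (hinv g y)))"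
  proof (intro continuous_intros)
    show "continuous_on {snd (g 0)..snd (g 1)} (\<lambda>y. g (hinv g y))"
      by (rule continuous_on_compose2[OF cg ci]) (use B in auto)
  qed
  then show "continuous_on {snd (g 0)..snd (g 1)} (Xc g)" by (simp add: Xc_def)
qed

lemma sign_prop:
  fixes D :: "nat \<Rightarrow> real \<Rightarrow> real"
  assumes conn: "\<And>i. i < k \<Longrightarrow> connected (J i)"
    and cont: "\<And>i. i < k \<Longrightarrow> continuous_on (J i) (D i)"
    and nz: "\<And>i y. i < k \<Longrightarrow> y \<in> J i \<Longrightarrow> D i y \<noteq> 0"
    and tr: "\<And>i. Suc i < k \<Longrightarrow> \<exists>w\<in>J i \<inter> J (Suc i). D i w = D (Suc i) w"
    and st: "y0 \<in> J 0" "D 0 y0 < 0"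
  shows "\<And>i. i < k \<Longrightarrow> \<forall>y\<in>J i. D i y < 0"
proof -
  have cs: "D i z < 0" if "i < k" "y \<in> J i" "z \<in> J i" "D i y < 0" for i y z
  proof (rule ccontr)
    assume "\<not> D i z < 0"
    then have "D i z > 0" using nz[OF that(1,3)] by linarith
    have "connected (D i ` J i)" using conn cont that(1) by (intro connected_continuous_image)
    then have "0 \<in> D i ` J i"
      unfolding connected_iff_interval using that \<open>D i z > 0\<close>
      by (metis imageI less_imp_le)
    then show False using nz that(1) by auto
  qed
  fix i assume "i < k"
  then show "\<forall>y\<in>J i. D i y < 0"
  proof (induction i)
    case 0 then show ?case using cs st by blast
  next
    case (Suc i)
    then obtain w where w: "w \<in> J i" "w \<in> J (Suc i)" "D i w = D (Suc i) w" using tr by blast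
    then have "D (Suc i) w < 0" using Suc by auto
    then show ?case using cs[OF Suc.prems w(2)] by blast
  qed
qed

lemma Xc_at:
  assumes "path g" "strict_mono_on {0..1} (\<lambda>t. snd (g t))" "t \<in> {0..1}"
  shows "Xc g (snd (g t)) = fst (g t)"
  using curve_facts(1)[OF assms(1,2)] assms(3) by (simp add: Xc_def)

theorem mainTheorem4:
  fixes V :: "'v set" and E :: "('v \<times> 'v) set" and u v :: 'v
  assumes "upward_planar V E"
    and "\<forall>x\<in>V. indeg E x \<le> 2 \<and> outdeg E x \<le> 2"
    and "(u, v) \<in> E"
    and "\<exists>p. is_dpath V E p u v \<and> p \<noteq> [u, v]"
  shows "\<forall>pos crv. upward_planar_drawing V E pos crv \<longrightarrow> bad_edge E pos crv (u, v)"
proof (intro allI impI)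
  fix pos crv assume dr: "upward_planar_drawing V E pos crv"
  have EV: "E \<subseteq> V \<times> V" using assms(1) by (simp add: upward_planar_def)
  have Ep: "\<And>a b. (a, b) \<in> E \<Longrightarrow> path (crv (a, b)) \<and> crv (a, b) 0 = pos a \<and> crv (a, b) 1 = pos b
      \<and> strict_mono_on {0..1} (\<lambda>t. snd (crv (a, b) t))"
    using dr unfolding upward_planar_drawing_def pathstart_def pathfinish_def by fast
  have Eint: "\<And>e t. e \<in> E \<Longrightarrow> t \<in> {0<..<1} \<Longrightarrow> crv e t \<notin> pos ` V"
    using dr unfolding upward_planar_drawing_def by blast
  have Ecr: "\<And>e e' s t. e \<in> E \<Longrightarrow> e' \<in> E \<Longrightarrow> e \<noteq> e' \<Longrightarrow> s \<in> {0..1} \<Longrightarrow> t \<in> {0..1} \<Longrightarrow>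
      crv e s = crv e' t \<Longrightarrow> (\<exists>w\<in>{fst e, snd e} \<inter> {fst e', snd e'}. crv e s = pos w)"
    using dr unfolding upward_planar_drawing_def by blast
  have Eh: "\<And>a b. (a, b) \<in> E \<Longrightarrow> snd (pos a) < snd (pos b)"
  proof -
    fix a b assume ab: "(a, b) \<in> E"
    have "snd (crv (a, b) 0) < snd (crv (a, b) 1)"
      using Ep[OF ab] strict_mono_onD[of "{0..1}" "\<lambda>t. snd (crv (a, b) t)" 0 1] by auto
    then show "snd (pos a) < snd (pos b)" using Ep[OF ab] by simp
  qed
  obtain p where dp: "is_dpath V E p u v" and pne: "p \<noteq> [u, v]" using assms(4) by blast
  have uv: "u \<noteq> v" using Eh[OF assms(3)] by auto
  have pn: "p \<noteq> []" "hd p = u" "last p = v" "distinct p" "set p \<subseteq> V"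
    and pe: "\<And>i. Suc i < length p \<Longrightarrow> (p ! i, p ! Suc i) \<in> E"
    using dp unfolding is_dpath_def by auto
  define k where "k = length p - 1"
  have p0: "p ! 0 = u" using pn by (simp add: hd_conv_nth)
  have pk: "p ! k = v" using pn by (simp add: last_conv_nth k_def)
  have k1: "k \<ge> 1" using p0 pk uv by (cases k) auto
  have k2: "k \<ge> 2"
  proof (rule ccontr)
    assume "\<not> k \<ge> 2"
    then have "k = 1" using k1 by simp
    then have "length p = 2" using k_def pn(1) by (cases p) auto
    then have "p = [p!0, p!1]"
      by (cases p; cases "tl p") auto
    then show False using pne p0 pk \<open>k = 1\<close> by simp
  qed
  have lp: "length p = Suc k" using k_def pn(1) by (cases p) auto
  define y where "y i = snd (pos (p ! i))" for i
  define g where "g i = crv (p ! i, p ! Suc i)" for i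
  define c where "c = crv (u, v)"
  define yu where "yu = snd (pos u)"
  define yv where "yv = snd (pos v)"
  have ge: "\<And>i. i < k \<Longrightarrow> (p ! i, p ! Suc i) \<in> E" using pe lp by simp
  have gp: "\<And>i. i < k \<Longrightarrow> path (g i) \<and> g i 0 = pos (p ! i) \<and> g i 1 = pos (p ! Suc i)
      \<and> strict_mono_on {0..1} (\<lambda>t. snd (g i t))"
    unfolding g_def using Ep ge by blast
  have cp: "path c \<and> c 0 = pos u \<and> c 1 = pos v \<and> strict_mono_on {0..1} (\<lambda>t. snd (c t))"
    unfolding c_def using Ep[OF assms(3)] by blast
  have ystep: "\<And>i. i < k \<Longrightarrow> y i < y (Suc i)" unfolding y_def using Eh ge by blast
  have ymono: "\<And>i j. i < j \<Longrightarrow> j \<le> k \<Longrightarrow> y i < y j"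
  proof -
    fix i j :: nat assume "i < j" "j \<le> k"
    then show "y i < y j"
    proof (induction j)
      case 0 then show ?case by simp
    next
      case (Suc j)
      have jk: "y j < y (Suc j)" using ystep[of j] Suc.prems by simp
      show ?case
      proof (cases "i = j")
        case True then show ?thesis using jk by simp
      next
        case False
        then have "y i < y j" using Suc by simp
        then show ?thesis using jk by simp
      qed
    qed
  qed
  have y0: "y 0 = yu" and yk: "y k = yv" using p0 pk by (auto simp: y_def yu_def yv_def)
  have yin: "\<And>i. 0 < i \<Longrightarrow> i < k \<Longrightarrow> yu < y i \<and> y i < yv"
  proof -
    fix i :: nat assume "0 < i" "i < k"
    then show "yu < y i \<and> y i < yv" using ymono[of 0 i] ymono[of i k] y0 yk by simp
  qed
  define J where "J i = {y i..y (Suc i)} \<inter> {yu<..<yv}" for i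
  define D where "D i z = Xc c z - Xc (g i) z" for i z
  have conn: "\<And>i. i < k \<Longrightarrow> connected (J i)"
    unfolding J_def connected_iff_interval by auto
  have cont: "\<And>i. i < k \<Longrightarrow> continuous_on (J i) (D i)"
  proof -
    fix i assume i: "i < k"
    have c1: "continuous_on {yu..yv} (Xc c)"
      using curve_facts(3)[of c] cp by (simp add: yu_def yv_def)
    have c2: "continuous_on {y i..y (Suc i)} (Xc (g i))"
      using curve_facts(3)[of "g i"] gp[OF i] by (simp add: y_def)
    show "continuous_on (J i) (D i)" unfolding D_def
      by (intro continuous_intros continuous_on_subset[OF c1] continuous_on_subset[OF c2])
        (auto simp: J_def)
  qed
  have nz: "\<And>i z. i < k \<Longrightarrow> z \<in> J i \<Longrightarrow> D i z \<noteq> 0"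
  proof
    fix i z assume i: "i < k" and z: "z \<in> J i" and D0: "D i z = 0"
    have zc: "z \<in> {snd (c 0)..snd (c 1)}" using z cp by (auto simp: J_def yu_def yv_def)
    have zg: "z \<in> {snd (g i 0)..snd (g i 1)}" using z gp[OF i] by (auto simp: J_def y_def)
    define s where "s = hinv c z"
    define t where "t = hinv (g i) z"
    have s: "s \<in> {0..1}" "snd (c s) = z" using curve_facts(2)[of c] cp zc s_def by auto
    have t: "t \<in> {0..1}" "snd (g i t) = z" using curve_facts(2)[of "g i"] gp[OF i] zg t_def by auto
    have "s \<noteq> 0" using s z cp by (auto simp: J_def yu_def)
    moreover have "s \<noteq> 1" using s z cp by (auto simp: J_def yv_def)
    ultimately have s01: "s \<in> {0<..<1}" using s by auto
    have "fst (c s) = fst (g i t)" using D0 s t by (simp add: D_def Xc_def s_def t_def)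
    then have eq: "c s = g i t" using s t by (simp add: prod_eq_iff)
    have ne: "(u, v) \<noteq> (p ! i, p ! Suc i)"
    proof
      assume h: "(u, v) = (p ! i, p ! Suc i)"
      then have "p ! i = p ! 0" using p0 by simp
      then have "i = 0" using pn(4) i lp by (simp add: nth_eq_iff_index_eq)
      then have "p ! 1 = p ! k" using h pk by simp
      then have "k = 1" using pn(4) k1 lp by (simp add: nth_eq_iff_index_eq)
      then show False using k2 by simp
    qed
    obtain w where "w \<in> {u, v}" "c s = pos w"
      using Ecr[OF assms(3) ge[OF i] ne s(1) t(1)] eq by (auto simp: c_def g_def)
    moreover have "{u, v} \<subseteq> V" using EV assms(3) by auto
    ultimately show False using Eint[OF assms(3) s01] by (auto simp: c_def)
  qed
  have tr: "\<And>i. Suc i < k \<Longrightarrow> \<exists>w\<in>J i \<inter> J (Suc i). D i w = D (Suc i) w"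
  proof -
    fix i assume i: "Suc i < k"
    have yy: "yu < y (Suc i) \<and> y (Suc i) < yv" using yin[of "Suc i"] i by simp
    have "Xc (g i) (y (Suc i)) = fst (pos (p ! Suc i))"
      using Xc_at[of "g i" 1] gp[of i] i by (simp add: y_def)
    moreover have "Xc (g (Suc i)) (y (Suc i)) = fst (pos (p ! Suc i))"
      using Xc_at[of "g (Suc i)" 0] gp[of "Suc i"] i by (simp add: y_def)
    moreover have "y (Suc i) \<in> J i \<inter> J (Suc i)"
      using yy ystep[of i] ystep[of "Suc i"] i by (auto simp: J_def)
    ultimately show "\<exists>w\<in>J i \<inter> J (Suc i). D i w = D (Suc i) w"
      unfolding D_def by (intro bexI[of _ "y (Suc i)"]) auto
  qed
  define z0 where "z0 = (y 0 + y 1) / 2"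
  have z0J: "z0 \<in> J 0"
    using ystep[of 0] yin[of 1] k2 y0 by (auto simp: J_def z0_def)
  have pcs: "p ! Suc (k - 1) = v" using pk k1 by simp
  have pk1: "p ! (k - 1) \<noteq> u"
  proof
    assume "p ! (k - 1) = u"
    then have "p ! (k - 1) = p ! 0" using p0 by simp
    then have "k - 1 = 0" using pn(4) lp by (simp add: nth_eq_iff_index_eq)
    then show False using k2 by simp
  qed
  have p1v: "p ! 1 \<noteq> v"
  proof
    assume "p ! 1 = v"
    then have "p ! 1 = p ! k" using pk by simp
    then have "1 = k" using pn(4) lp k1 by (simp add: nth_eq_iff_index_eq)
    then show False using k2 by simp
  qed
  have e0: "(u, p ! 1) \<in> E" using ge[of 0] k1 p0 by simp
  have ek: "(p ! (k - 1), v) \<in> E" using ge[of "k - 1"] k1 pcs by simp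
  have g0: "g 0 = crv (u, p ! 1)" using p0 by (simp add: g_def)
  have gk: "g (k - 1) = crv (p ! (k - 1), v)" using pcs by (simp add: g_def)
  have nearu: "\<And>s t. s \<in> {0<..1} \<Longrightarrow> t \<in> {0<..1} \<Longrightarrow> snd (c s) = snd (g 0 t) \<Longrightarrow>
      snd (c s) < yu + (y 1 - yu) \<Longrightarrow> snd (c s) \<in> J 0 \<and> Xc c (snd (c s)) = fst (c s)
        \<and> Xc (g 0) (snd (c s)) = fst (g 0 t)"
  proof -
    fix s t :: real assume s: "s \<in> {0<..1}" and t: "t \<in> {0<..1}" and h: "snd (c s) = snd (g 0 t)"
      and lt: "snd (c s) < yu + (y 1 - yu)"
    have "snd (c 0) < snd (c s)" using cp s strict_mono_onD[of "{0..1}" "\<lambda>t. snd (c t)" 0 s] by auto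
    then have a: "yu < snd (c s)" using cp by (simp add: yu_def)
    have "y 1 < yv" using yin[of 1] k2 by simp
    then have "snd (c s) \<in> J 0" using a lt y0 by (auto simp: J_def)
    moreover have "Xc c (snd (c s)) = fst (c s)" using Xc_at[of c s] cp s by auto
    moreover have "Xc (g 0) (snd (c s)) = fst (g 0 t)" using Xc_at[of "g 0" t] gp[of 0] k1 t h by auto
    ultimately show "snd (c s) \<in> J 0 \<and> Xc c (snd (c s)) = fst (c s)
        \<and> Xc (g 0) (snd (c s)) = fst (g 0 t)" by blast
  qed
  have nearv: "\<And>s t. s \<in> {0..<1} \<Longrightarrow> t \<in> {0..<1} \<Longrightarrow> snd (c s) = snd (g (k - 1) t) \<Longrightarrow>
      snd (c s) > yv - (yv - y (k - 1)) \<Longrightarrow> snd (c s) \<in> J (k - 1) \<and> Xc c (snd (c s)) = fst (c s)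
        \<and> Xc (g (k - 1)) (snd (c s)) = fst (g (k - 1) t)"
  proof -
    fix s t :: real assume s: "s \<in> {0..<1}" and t: "t \<in> {0..<1}" and h: "snd (c s) = snd (g (k - 1) t)"
      and lt: "snd (c s) > yv - (yv - y (k - 1))"
    have "snd (c s) < snd (c 1)" using cp s strict_mono_onD[of "{0..1}" "\<lambda>t. snd (c t)" s 1] by auto
    then have a: "snd (c s) < yv" using cp by (simp add: yv_def)
    have "yu < y (k - 1)" using yin[of "k - 1"] k2 by simp
    moreover have "y (Suc (k - 1)) = yv" using yk k1 by simp
    ultimately have "snd (c s) \<in> J (k - 1)" using a lt by (auto simp: J_def)
    moreover have "Xc c (snd (c s)) = fst (c s)" using Xc_at[of c s] cp s by auto
    moreover have "Xc (g (k - 1)) (snd (c s)) = fst (g (k - 1) t)"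
      using Xc_at[of "g (k - 1)" t] gp[of "k - 1"] k1 t h by auto
    ultimately show "snd (c s) \<in> J (k - 1) \<and> Xc c (snd (c s)) = fst (c s)
        \<and> Xc (g (k - 1)) (snd (c s)) = fst (g (k - 1) t)" by blast
  qed
  have dpos1: "y 1 - yu > 0" using ystep[of 0] k1 y0 by simp
  have dpos2: "yv - y (k - 1) > 0" using ystep[of "k - 1"] k1 yk by simp
  show "bad_edge E pos crv (u, v)"
  proof (cases "D 0 z0 < 0")
    case True
    have neg: "\<And>i. i < k \<Longrightarrow> \<forall>z\<in>J i. D i z < 0"
      by (rule sign_prop[of k J D z0]) (use conn cont nz tr z0J True in auto)
    have "out_left_of pos crv u (u, v) (u, p ! 1)"
      unfolding out_left_of_def
    proof (intro exI[of _ "y 1 - yu"] conjI dpos1 ballI impI)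
      fix s t assume s: "s \<in> {0<..1}" and t: "t \<in> {0<..1}"
        and h: "snd (crv (u, v) s) = snd (crv (u, p ! 1) t) \<and> snd (crv (u, v) s) < snd (pos u) + (y 1 - yu)"
      from h have h1: "snd (c s) = snd (g 0 t)" and h2: "snd (c s) < yu + (y 1 - yu)"
        unfolding c_def[symmetric] g0[symmetric] yu_def[symmetric] by auto
      note N = nearu[OF s t h1 h2]
      have "D 0 (snd (c s)) < 0" using neg[of 0] k1 N by simp
      then show "fst (crv (u, v) s) < fst (crv (u, p ! 1) t)"
        unfolding c_def[symmetric] g0[symmetric] using N by (simp add: D_def)
    qed
    moreover have "in_left_of pos crv v (u, v) (p ! (k - 1), v)"
      unfolding in_left_of_def
    proof (intro exI[of _ "yv - y (k - 1)"] conjI dpos2 ballI impI)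
      fix s t assume s: "s \<in> {0..<1}" and t: "t \<in> {0..<1}"
        and h: "snd (crv (u, v) s) = snd (crv (p ! (k - 1), v) t) \<and> snd (crv (u, v) s) > snd (pos v) - (yv - y (k - 1))"
      from h have h1: "snd (c s) = snd (g (k - 1) t)" and h2: "snd (c s) > yv - (yv - y (k - 1))"
        unfolding c_def[symmetric] gk[symmetric] yv_def[symmetric] by auto
      note N = nearv[OF s t h1 h2]
      have "D (k - 1) (snd (c s)) < 0" using neg[of "k - 1"] k1 N by simp
      then show "fst (crv (u, v) s) < fst (crv (p ! (k - 1), v) t)"
        unfolding c_def[symmetric] gk[symmetric] using N by (simp add: D_def)
    qed
    ultimately show ?thesis
      unfolding bad_edge_def left_out_edge_def left_in_edge_def
      using e0 ek p1v pk1 by fastforce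
  next
    case False
    then have "- D 0 z0 < 0" using nz[OF _ z0J] k1 by fastforce
    then have pos: "\<And>i. i < k \<Longrightarrow> \<forall>z\<in>J i. - D i z < 0"
      by (intro sign_prop[of k J "\<lambda>i z. - D i z" z0]) (use conn cont nz tr z0J in \<open>auto intro: continuous_intros\<close>)
    have "out_left_of pos crv u (u, p ! 1) (u, v)"
      unfolding out_left_of_def
    proof (intro exI[of _ "y 1 - yu"] conjI dpos1 ballI impI)
      fix s t assume t: "s \<in> {0<..1}" and s: "t \<in> {0<..1}"
        and h: "snd (crv (u, p ! 1) s) = snd (crv (u, v) t) \<and> snd (crv (u, p ! 1) s) < snd (pos u) + (y 1 - yu)"
      from h have h1: "snd (c t) = snd (g 0 s)" and h2: "snd (c t) < yu + (y 1 - yu)"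
        unfolding c_def[symmetric] g0[symmetric] yu_def[symmetric] by auto
      note N = nearu[OF s t h1 h2]
      have "- D 0 (snd (c t)) < 0" using pos[of 0] k1 N by simp
      then show "fst (crv (u, p ! 1) s) < fst (crv (u, v) t)"
        unfolding c_def[symmetric] g0[symmetric] using N by (simp add: D_def)
    qed
    moreover have "in_left_of pos crv v (p ! (k - 1), v) (u, v)"
      unfolding in_left_of_def
    proof (intro exI[of _ "yv - y (k - 1)"] conjI dpos2 ballI impI)
      fix s t assume t: "s \<in> {0..<1}" and s: "t \<in> {0..<1}"
        and h: "snd (crv (p ! (k - 1), v) s) = snd (crv (u, v) t) \<and> snd (crv (p ! (k - 1), v) s) > snd (pos v) - (yv - y (k - 1))"
      from h have h1: "snd (c t) = snd (g (k - 1) s)" and h2: "snd (c t) > yv - (yv - y (k - 1))"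
        unfolding c_def[symmetric] gk[symmetric] yv_def[symmetric] by auto
      note N = nearv[OF s t h1 h2]
      have "- D (k - 1) (snd (c t)) < 0" using pos[of "k - 1"] k1 N by simp
      then show "fst (crv (p ! (k - 1), v) s) < fst (crv (u, v) t)"
        unfolding c_def[symmetric] gk[symmetric] using N by (simp add: D_def)
    qed
    ultimately show ?thesis
      unfolding bad_edge_def right_out_edge_def right_in_edge_def
      using e0 ek p1v pk1 by fastforce
  qed
qed

end
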